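(* Let $\mathbb{T}$ be the $3$-regular tree ($q=2$), let $T_2$ be the star consisting of a vertex $v_0$ and its three neighbours, and let $H\subset T_2$ be a path $a - v_0 - b$ with $a,b$ two of the neighbours of $v_0$. Let $\mu_H$ be the probability measure on $\{0,1\}^{\{a,v_0,b\}}$ giving probability $1/4$ to each of the configurations $(\eta_a,\eta_{v_0},\eta_b)\in\{(0,1,1),(0,0,1),(1,1,0),(1,0,0)\}$. Then $\mu_H$ is locally invariant (LI), but there is no LI probability measure on $\{0,1\}^{T_2}$ whose marginal on $\{0,1\}^{H}$ is $\mu_H$; hence there is no automorphism-invariant probability measure on $\{0,1\}^{\mathbb{T}}$ with marginal $\mu_H$.
   Context: A probability measure $\mu_H$ on $\Omega^{V(H)}$, $H$ a subgraph of $\mathbb{T}$, is locally invariant (LI) if whenever $H_1,H_2$ are connected subgraphs of $H$ and $\phi:H_1\to H_2$ is a graph isomorphism, the marginals of $\mu_H$ on $H_1$ and $H_2$ correspond under $\phi$. *)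

theory Defs
  imports "HOL-Probability.Probability"
begin

text \<open>Vertices: reduced words over the alphabet {0,1,2} (no two consecutive letters equal),
  i.e. the Cayley graph of the free product of three copies of Z/2. Two words are adjacent iff
  one is obtained from the other by appending a single letter.\<close>

definition T3_vert :: "nat list \<Rightarrow> bool" where
  "T3_vert xs \<longleftrightarrow> set xs \<subseteq> {0, 1, 2} \<and> (\<forall>i. Suc i < length xs \<longrightarrow> xs ! i \<noteq> xs ! Suc i)"

definition T3V :: "nat list set" where
  "T3V = {xs. T3_vert xs}"

definition T3_adj :: "nat list \<Rightarrow> nat list \<Rightarrow> bool" where
  "T3_adj x y \<longleftrightarrow> x \<in> T3V \<and> y \<in> T3V \<and> ((\<exists>i. y = x @ [i]) \<or> (\<exists>i. x = y @ [i]))"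

definition T3_aut :: "(nat list \<Rightarrow> nat list) \<Rightarrow> bool" where
  "T3_aut g \<longleftrightarrow> bij_betw g T3V T3V \<and> (\<forall>x\<in>T3V. \<forall>y\<in>T3V. T3_adj x y \<longleftrightarrow> T3_adj (g x) (g y))"

definition config_space :: "'v set \<Rightarrow> ('v \<Rightarrow> nat) set" where
  "config_space S = PiE S (\<lambda>_. {0, 1})"

definition measure_on :: "'v set \<Rightarrow> ('v \<Rightarrow> nat) pmf \<Rightarrow> bool" where
  "measure_on S \<mu> \<longleftrightarrow> set_pmf \<mu> \<subseteq> config_space S"

definition marg :: "'v set \<Rightarrow> ('v \<Rightarrow> nat) pmf \<Rightarrow> ('v \<Rightarrow> nat) pmf" where
  "marg S \<mu> = map_pmf (\<lambda>\<eta>. restrict \<eta> S) \<mu>"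

text \<open>Connectedness of the subgraph induced on S (connected subgraphs of a tree are induced).\<close>
definition connected_in :: "('v \<Rightarrow> 'v \<Rightarrow> bool) \<Rightarrow> 'v set \<Rightarrow> bool" where
  "connected_in adj S \<longleftrightarrow> S \<noteq> {} \<and>
     (\<forall>x\<in>S. \<forall>y\<in>S. (\<lambda>u w. u \<in> S \<and> w \<in> S \<and> adj u w)\<^sup>*\<^sup>* x y)"

definition graph_iso :: "('v \<Rightarrow> 'v \<Rightarrow> bool) \<Rightarrow> 'v set \<Rightarrow> 'v set \<Rightarrow> ('v \<Rightarrow> 'v) \<Rightarrow> bool" where
  "graph_iso adj S1 S2 \<phi> \<longleftrightarrow> bij_betw \<phi> S1 S2 \<and>
     (\<forall>x\<in>S1. \<forall>y\<in>S1. adj x y \<longleftrightarrow> adj (\<phi> x) (\<phi> y))"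

definition LI :: "('v \<Rightarrow> 'v \<Rightarrow> bool) \<Rightarrow> 'v set \<Rightarrow> ('v \<Rightarrow> nat) pmf \<Rightarrow> bool" where
  "LI adj H \<mu> \<longleftrightarrow> measure_on H \<mu> \<and>
     (\<forall>H1 H2 \<phi>. H1 \<subseteq> H \<and> H2 \<subseteq> H \<and> connected_in adj H1 \<and> connected_in adj H2 \<and>
        graph_iso adj H1 H2 \<phi> \<longrightarrow>
        marg H1 \<mu> = map_pmf (\<lambda>\<xi>. \<lambda>v\<in>H1. \<xi> (\<phi> v)) (marg H2 \<mu>))"

definition tree_config_measure :: "(nat list \<Rightarrow> nat) measure" where
  "tree_config_measure = PiM T3V (\<lambda>_. count_space {0, 1})"

definition aut_invariant :: "(nat list \<Rightarrow> nat) measure \<Rightarrow> bool" where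
  "aut_invariant M \<longleftrightarrow> (\<forall>g. T3_aut g \<longrightarrow> distr M M (\<lambda>\<eta>. \<lambda>v\<in>T3V. \<eta> (g v)) = M)"

definition cfg3 :: "'v \<Rightarrow> 'v \<Rightarrow> 'v \<Rightarrow> nat \<Rightarrow> nat \<Rightarrow> nat \<Rightarrow> 'v \<Rightarrow> nat" where
  "cfg3 a v0 b x y z = (\<lambda>v. if v = a then x else if v = v0 then y else if v = b then z else undefined)"

definition muH :: "'v \<Rightarrow> 'v \<Rightarrow> 'v \<Rightarrow> ('v \<Rightarrow> nat) pmf" where
  "muH a v0 b = pmf_of_set {cfg3 a v0 b 0 1 1, cfg3 a v0 b 0 0 1, cfg3 a v0 b 1 1 0, cfg3 a v0 b 1 0 0}"

end

theory Submission
  imports Defs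
begin


lemma T3_vert_Nil[simp]: "T3_vert []" by (simp add: T3_vert_def)

lemma T3_vert_Cons: "T3_vert (x#xs) \<longleftrightarrow> x \<in> {0,1,2} \<and> T3_vert xs \<and> (xs = [] \<or> hd xs \<noteq> x)"
proof
  assume h: "T3_vert (x#xs)"
  have A: "set xs \<subseteq> {0,1,2}" "x \<in> {0,1,2}" using h by (auto simp: T3_vert_def)
  have B: "\<forall>i. Suc i < length (x#xs) \<longrightarrow> (x#xs) ! i \<noteq> (x#xs) ! Suc i" using h by (simp add: T3_vert_def)
  have C: "\<forall>i. Suc i < length xs \<longrightarrow> xs ! i \<noteq> xs ! Suc i"
  proof (intro allI impI)
    fix i assume "Suc i < length xs"
    with B[rule_format, of "Suc i"] show "xs ! i \<noteq> xs ! Suc i" by simp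
  qed
  have D: "xs = [] \<or> hd xs \<noteq> x"
  proof (cases xs)
    case (Cons y ys) with B[rule_format, of 0] show ?thesis by simp
  qed simp
  show "x \<in> {0,1,2} \<and> T3_vert xs \<and> (xs = [] \<or> hd xs \<noteq> x)" using A C D by (simp add: T3_vert_def)
next
  assume h: "x \<in> {0,1,2} \<and> T3_vert xs \<and> (xs = [] \<or> hd xs \<noteq> x)"
  have "\<forall>i. Suc i < length (x#xs) \<longrightarrow> (x#xs) ! i \<noteq> (x#xs) ! Suc i"
  proof (intro allI impI)
    fix i assume i: "Suc i < length (x#xs)"
    show "(x#xs) ! i \<noteq> (x#xs) ! Suc i"
    proof (cases i)
      case 0 with h i show ?thesis by (cases xs) auto
    next
      case (Suc j) with h i show ?thesis by (simp add: T3_vert_def)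
    qed
  qed
  with h show "T3_vert (x#xs)" by (simp add: T3_vert_def)
qed

lemma T3V_iff: "xs \<in> T3V \<longleftrightarrow> T3_vert xs" by (simp add: T3V_def)

lemma T3_adj_sym: "T3_adj x y = T3_adj y x" unfolding T3_adj_def by blast

lemma T3_adj_len: "T3_adj x y \<Longrightarrow> length y = Suc (length x) \<or> length x = Suc (length y)"
  unfolding T3_adj_def by auto

lemma T3_adj_irrefl: "\<not> T3_adj x x" using T3_adj_len by fastforce

lemma T3_adj_Nil: "T3_adj [] y \<Longrightarrow> \<exists>i\<in>{0,1,2}. y = [i]"
  unfolding T3_adj_def by (auto simp: T3V_iff T3_vert_Cons)

lemma T3_adj_Nil2: "i \<in> {0,1,2} \<Longrightarrow> T3_adj [] [i]"
  unfolding T3_adj_def by (auto simp: T3V_iff T3_vert_Cons)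

definition Lm :: "nat \<Rightarrow> nat list \<Rightarrow> nat list" where
  "Lm s w = (if w \<noteq> [] \<and> hd w = s then tl w else s # w)"

definition sw :: "nat \<Rightarrow> nat \<Rightarrow> nat \<Rightarrow> nat" where
  "sw j k x = (if x = j then k else if x = k then j else x)"

definition Pm :: "nat \<Rightarrow> nat \<Rightarrow> nat list \<Rightarrow> nat list" where
  "Pm j k w = map (sw j k) w"

lemma aut_inv:
  assumes "\<And>x. x \<in> T3V \<Longrightarrow> g x \<in> T3V" "\<And>x. x \<in> T3V \<Longrightarrow> g (g x) = x"
    "\<And>x y. T3_adj x y \<Longrightarrow> T3_adj (g x) (g y)"
  shows "T3_aut g"
  unfolding T3_aut_def
proof
  show "bij_betw g T3V T3V" by (rule bij_betw_byWitness[where f'=g]) (use assms in auto)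
  show "\<forall>x\<in>T3V. \<forall>y\<in>T3V. T3_adj x y = T3_adj (g x) (g y)"
    using assms by metis
qed

lemma aut_comp: assumes "T3_aut f" "T3_aut g" shows "T3_aut (f \<circ> g)"
proof -
  have f: "bij_betw f T3V T3V" "\<And>x y. x \<in> T3V \<Longrightarrow> y \<in> T3V \<Longrightarrow> T3_adj x y = T3_adj (f x) (f y)"
    using assms(1) unfolding T3_aut_def by auto
  have g: "bij_betw g T3V T3V" "\<And>x y. x \<in> T3V \<Longrightarrow> y \<in> T3V \<Longrightarrow> T3_adj x y = T3_adj (g x) (g y)"
    using assms(2) unfolding T3_aut_def by auto
  show ?thesis unfolding T3_aut_def
  proof (intro conjI ballI)
    show "bij_betw (f \<circ> g) T3V T3V" using g(1) f(1) by (rule bij_betw_trans)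
    fix x y assume xy: "x \<in> T3V" "y \<in> T3V"
    have gg: "g x \<in> T3V" "g y \<in> T3V" using xy g(1) by (auto simp: bij_betw_apply)
    show "T3_adj x y = T3_adj ((f \<circ> g) x) ((f \<circ> g) y)"
      using f(2)[OF gg] g(2)[OF xy] by (simp only: comp_def)
  qed
qed

lemma aut_id: "T3_aut id" unfolding T3_aut_def by simp

lemma Lm_T3V: "s \<in> {0,1,2} \<Longrightarrow> w \<in> T3V \<Longrightarrow> Lm s w \<in> T3V"
  by (cases w) (auto simp: Lm_def T3V_iff T3_vert_Cons)

lemma Lm_inv: "w \<in> T3V \<Longrightarrow> Lm s (Lm s w) = w"
  by (cases w) (auto simp: Lm_def T3V_iff T3_vert_Cons)

lemma Lm_adj: assumes "s \<in> {0,1,2}" "T3_adj x y" shows "T3_adj (Lm s x) (Lm s y)"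
proof -
  have key: "T3_adj (Lm s x) (Lm s y)" if "T3_adj x y" "y = x @ [i]" for x y i
  proof -
    have xy: "x \<in> T3V" "y \<in> T3V" using that unfolding T3_adj_def by auto
    have m: "Lm s x \<in> T3V" "Lm s y \<in> T3V" using Lm_T3V[OF assms(1)] xy by auto
    show ?thesis
    proof (cases "x = []")
      case True
      then show ?thesis using that m unfolding T3_adj_def by (auto simp: Lm_def)
    next
      case False
      then have "Lm s y = Lm s x @ [i]" using that by (cases x) (auto simp: Lm_def)
      then show ?thesis using m unfolding T3_adj_def by auto
    qed
  qed
  from assms(2) obtain i where "y = x @ [i] \<or> x = y @ [i]" unfolding T3_adj_def by auto
  then show ?thesis using key assms(2) T3_adj_sym by metis
qed

lemma Lm_aut: "s \<in> {0,1,2} \<Longrightarrow> T3_aut (Lm s)"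
  by (rule aut_inv) (auto simp: Lm_T3V Lm_inv Lm_adj)

lemma map_T3_vert: assumes "inj_on f {0,1,2}" "f ` {0,1,2} \<subseteq> {0,1,2}"
  shows "T3_vert xs \<Longrightarrow> T3_vert (map f xs)"
proof (induction xs)
  case (Cons x xs)
  then have h: "x \<in> {0,1,2}" "T3_vert xs" "xs = [] \<or> hd xs \<noteq> x" by (auto simp: T3_vert_Cons)
  have "xs = [] \<or> hd (map f xs) \<noteq> f x"
  proof (cases xs)
    case (Cons y ys)
    then have "y \<in> {0,1,2}" using h(2) by (simp add: T3_vert_Cons)
    then show ?thesis using h(1,3) Cons inj_onD[OF assms(1), of y x] by auto
  qed simp
  moreover have "f x \<in> {0,1,2}" using subsetD[OF assms(2) imageI[OF h(1)]] .
  moreover have "T3_vert (map f xs)" using Cons.IH h(2) by blast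
  ultimately show ?case by (simp only: list.map T3_vert_Cons) simp
qed simp

lemma sw_props: assumes "j \<in> {0,1,2}" "k \<in> {0,1,2}"
  shows "inj_on (sw j k) {0,1,2}" "sw j k ` {0,1,2} \<subseteq> {0,1,2}"
proof -
  have "sw j k (sw j k x) = x" for x by (simp add: sw_def)
  then show "inj_on (sw j k) {0,1,2}" by (metis inj_onI)
  show "sw j k ` {0,1,2} \<subseteq> {0,1,2}" using assms by (auto simp: sw_def)
qed

lemma Pm_T3V: assumes "j \<in> {0,1,2}" "k \<in> {0,1,2}" shows "w \<in> T3V \<Longrightarrow> Pm j k w \<in> T3V"
  using map_T3_vert[OF sw_props[OF assms]] by (simp add: Pm_def T3V_iff)

lemma Pm_inv: "Pm j k (Pm j k w) = w"
  by (induction w) (auto simp: Pm_def sw_def)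

lemma Pm_adj: assumes "j \<in> {0,1,2}" "k \<in> {0,1,2}" "T3_adj x y" shows "T3_adj (Pm j k x) (Pm j k y)"
  using assms(3) Pm_T3V[OF assms(1,2)] unfolding T3_adj_def Pm_def by auto

lemma Pm_aut: "j \<in> {0,1,2} \<Longrightarrow> k \<in> {0,1,2} \<Longrightarrow> T3_aut (Pm j k)"
  by (rule aut_inv) (auto simp: Pm_T3V Pm_inv Pm_adj)

fun Lw :: "nat list \<Rightarrow> nat list \<Rightarrow> nat list" where
  "Lw [] = id"
| "Lw (x#xs) = Lm x \<circ> Lw xs"

lemma Lw_append: "Lw (xs @ ys) = Lw xs \<circ> Lw ys"
  by (induction xs) auto

lemma Lw_aut: "set xs \<subseteq> {0,1,2} \<Longrightarrow> T3_aut (Lw xs)"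
proof (induction xs)
  case (Cons x xs)
  then have hx: "x \<in> {0,1,2}" and hs: "set xs \<subseteq> {0,1,2}" by auto
  have "T3_aut (Lm x \<circ> Lw xs)" by (rule aut_comp[OF Lm_aut[OF hx] Cons.IH[OF hs]])
  then show ?case by (simp only: Lw.simps)
qed (simp add: aut_id)

lemma aut_T3V: "T3_aut g \<Longrightarrow> x \<in> T3V \<Longrightarrow> g x \<in> T3V"
  unfolding T3_aut_def by (auto simp: bij_betw_apply)

lemma aut_adj: assumes "T3_aut g" "T3_adj x y" shows "T3_adj (g x) (g y)"
proof -
  have "x \<in> T3V" "y \<in> T3V" using assms(2) unfolding T3_adj_def by auto
  then show ?thesis using assms unfolding T3_aut_def by blast
qed

lemma Lw_inv: "set xs \<subseteq> {0,1,2} \<Longrightarrow> w \<in> T3V \<Longrightarrow> Lw (rev xs) (Lw xs w) = w"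
proof (induction xs)
  case (Cons x xs)
  have s: "set xs \<subseteq> {0,1,2}" using Cons.prems by simp
  have m: "Lw xs w \<in> T3V" by (rule aut_T3V[OF Lw_aut[OF s] Cons.prems(2)])
  have "Lw (rev (x # xs)) (Lw (x # xs) w) = Lw (rev xs) (Lm x (Lm x (Lw xs w)))"
    by (simp add: Lw_append)
  also have "\<dots> = Lw (rev xs) (Lw xs w)" using Lm_inv[OF m] by simp
  also have "\<dots> = w" using Cons.IH[OF s Cons.prems(2)] .
  finally show ?case .
qed simp

lemma Lw_Nil: "T3_vert xs \<Longrightarrow> Lw xs [] = xs"
proof (induction xs)
  case (Cons x xs)
  then have h: "T3_vert xs" "xs = [] \<or> hd xs \<noteq> x" by (simp_all add: T3_vert_Cons)
  have "Lw (x # xs) [] = Lm x xs" using Cons.IH[OF h(1)] by simp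
  also have "\<dots> = x # xs" using h(2) by (auto simp: Lm_def)
  finally show ?case .
qed simp



definition Gf :: "'v \<Rightarrow> 'v \<Rightarrow> 'v \<Rightarrow> nat \<times> nat \<Rightarrow> 'v \<Rightarrow> nat" where
  "Gf a v0 b p = cfg3 a v0 b (fst p) (snd p) (1 - fst p)"

definition Bs :: "(nat \<times> nat) set" where "Bs = {(0,0),(0,1),(1,0),(1,1)}"

definition Taus :: "(nat \<times> nat \<Rightarrow> nat \<times> nat) set" where
  "Taus = {id, \<lambda>(x,y). (y,x), \<lambda>(x,y). (1-x,y), \<lambda>(x,y). (1-y,x), \<lambda>(x,y). (y,1-x), \<lambda>(x,y). (1-y,1-x)}"

lemma bij_of_image: "finite A \<Longrightarrow> f ` A = A \<Longrightarrow> bij_betw f A A"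
  unfolding bij_betw_def by (simp add: eq_card_imp_inj_on)

lemma Taus_bij: "\<tau> \<in> Taus \<Longrightarrow> bij_betw \<tau> Bs Bs"
  unfolding Taus_def by (elim insertE emptyE; rule bij_of_image; auto simp: Bs_def)

lemma perm_map:
  assumes "finite B" "B \<noteq> {}" "bij_betw \<tau> B B" "\<And>p. p \<in> B \<Longrightarrow> f p = g (\<tau> p)"
  shows "map_pmf f (pmf_of_set B) = map_pmf g (pmf_of_set B)"
proof -
  have "map_pmf f (pmf_of_set B) = map_pmf (g \<circ> \<tau>) (pmf_of_set B)"
    using assms by (intro map_pmf_cong) auto
  also have "\<dots> = map_pmf g (map_pmf \<tau> (pmf_of_set B))" by (simp add: map_pmf_comp comp_def)
  also have "map_pmf \<tau> (pmf_of_set B) = pmf_of_set (\<tau> ` B)"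
    using assms by (intro map_pmf_of_set_inj) (auto simp: bij_betw_def)
  also have "\<tau> ` B = B" using assms(3) by (simp add: bij_betw_def)
  finally show ?thesis .
qed

context
  fixes a v0 b :: 'v
  assumes d: "a \<noteq> v0" "v0 \<noteq> b" "a \<noteq> b"
begin

lemma G_simps[simp]: "Gf a v0 b p a = fst p" "Gf a v0 b p v0 = snd p" "Gf a v0 b p b = 1 - fst p"
  using d by (auto simp: Gf_def cfg3_def)

lemma muH_eq: "muH a v0 b = map_pmf (Gf a v0 b) (pmf_of_set Bs)"
proof -
  have inj: "inj_on (Gf a v0 b) Bs"
  proof (rule inj_onI)
    fix p q assume "p \<in> Bs" "q \<in> Bs" "Gf a v0 b p = Gf a v0 b q"
    then have "Gf a v0 b p a = Gf a v0 b q a" "Gf a v0 b p v0 = Gf a v0 b q v0" by auto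
    then show "p = q" by (simp add: prod_eq_iff)
  qed
  have "map_pmf (Gf a v0 b) (pmf_of_set Bs) = pmf_of_set (Gf a v0 b ` Bs)"
    by (rule map_pmf_of_set_inj[OF inj]) (auto simp: Bs_def)
  also have "Gf a v0 b ` Bs = {cfg3 a v0 b 0 1 1, cfg3 a v0 b 0 0 1, cfg3 a v0 b 1 1 0, cfg3 a v0 b 1 0 0}"
    by (auto simp: Bs_def Gf_def)
  finally show ?thesis by (simp add: muH_def)
qed

lemma cfg3_in: "x \<in> {0,1} \<Longrightarrow> y \<in> {0,1} \<Longrightarrow> z \<in> {0,1} \<Longrightarrow> cfg3 a v0 b x y z \<in> config_space {a,v0,b}"
  unfolding config_space_def cfg3_def by (auto simp: PiE_iff extensional_def)

lemma set_muH: "set_pmf (muH a v0 b) = {cfg3 a v0 b 0 1 1, cfg3 a v0 b 0 0 1, cfg3 a v0 b 1 1 0, cfg3 a v0 b 1 0 0}"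
  unfolding muH_def by (subst set_pmf_of_set) auto

lemma rtranclp_empty: "R\<^sup>*\<^sup>* x y \<Longrightarrow> (\<And>u w. \<not> R u w) \<Longrightarrow> x = y"
  by (induction rule: rtranclp_induct) auto

lemma ex_single: assumes "s \<in> {a,v0,b}" "\<phi> s \<in> {a,v0,b}"
  shows "\<exists>\<tau>\<in>Taus. \<forall>p\<in>Bs. \<forall>v\<in>{s}. Gf a v0 b p v = Gf a v0 b (\<tau> p) (\<phi> v)"
  using assms by (elim insertE emptyE disjE conjE; simp add: Taus_def Bs_def)

lemma ex_edge1: assumes "\<phi> a \<in> {a,v0,b}" "\<phi> v0 \<in> {a,v0,b}" "\<phi> a \<noteq> \<phi> v0"
   "\<phi> a \<noteq> b \<or> \<phi> v0 \<noteq> a" "\<phi> a \<noteq> a \<or> \<phi> v0 \<noteq> b"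
  shows "\<exists>\<tau>\<in>Taus. \<forall>p\<in>Bs. \<forall>v\<in>{a,v0}. Gf a v0 b p v = Gf a v0 b (\<tau> p) (\<phi> v)"
  using assms by (elim insertE emptyE disjE conjE; simp add: Taus_def Bs_def)

lemma ex_edge2: assumes "\<phi> v0 \<in> {a,v0,b}" "\<phi> b \<in> {a,v0,b}" "\<phi> v0 \<noteq> \<phi> b"
   "\<phi> v0 \<noteq> b \<or> \<phi> b \<noteq> a" "\<phi> v0 \<noteq> a \<or> \<phi> b \<noteq> b"
  shows "\<exists>\<tau>\<in>Taus. \<forall>p\<in>Bs. \<forall>v\<in>{v0,b}. Gf a v0 b p v = Gf a v0 b (\<tau> p) (\<phi> v)"
  using assms by (elim insertE emptyE disjE conjE; simp add: Taus_def Bs_def)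

lemma ex_full: assumes "\<phi> v0 = v0" "(\<phi> a = a \<and> \<phi> b = b) \<or> (\<phi> a = b \<and> \<phi> b = a)"
  shows "\<exists>\<tau>\<in>Taus. \<forall>p\<in>Bs. \<forall>v\<in>{a,v0,b}. Gf a v0 b p v = Gf a v0 b (\<tau> p) (\<phi> v)"
  using assms by (elim insertE emptyE disjE conjE; simp add: Taus_def Bs_def)

lemma LI_muH:
  fixes adj
  assumes adj: "adj a v0" "adj v0 a" "adj v0 b" "adj b v0" "\<not> adj a b" "\<not> adj b a"
    "\<not> adj a a" "\<not> adj v0 v0" "\<not> adj b b"
  shows "LI adj {a,v0,b} (muH a v0 b)"
  unfolding LI_def
proof (intro conjI allI impI)
  show "measure_on {a,v0,b} (muH a v0 b)"
    unfolding measure_on_def set_muH by (auto intro: cfg3_in)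
  fix H1 H2 \<phi>
  assume h: "H1 \<subseteq> {a,v0,b} \<and> H2 \<subseteq> {a,v0,b} \<and> connected_in adj H1 \<and> connected_in adj H2 \<and> graph_iso adj H1 H2 \<phi>"
  then have sub: "H1 \<subseteq> {a,v0,b}" and con: "connected_in adj H1" and iso: "graph_iso adj H1 H2 \<phi>" by auto
  have phiH2: "\<phi> v \<in> H2" if "v \<in> H1" for v using iso that unfolding graph_iso_def by (auto simp: bij_betw_apply)
  have phiH: "\<phi> v \<in> {a,v0,b}" if "v \<in> H1" for v using phiH2[OF that] h by auto
  have inj: "inj_on \<phi> H1" using iso unfolding graph_iso_def bij_betw_def by auto
  have adjiff: "\<And>x y. x \<in> H1 \<Longrightarrow> y \<in> H1 \<Longrightarrow> adj x y = adj (\<phi> x) (\<phi> y)"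
    using iso unfolding graph_iso_def by auto
  let ?G = "Gf a v0 b"
  have L: "marg H1 (muH a v0 b) = map_pmf (\<lambda>p. restrict (?G p) H1) (pmf_of_set Bs)"
    unfolding marg_def muH_eq by (simp add: map_pmf_comp)
  have R: "map_pmf (\<lambda>\<xi>. \<lambda>v\<in>H1. \<xi> (\<phi> v)) (marg H2 (muH a v0 b)) = map_pmf (\<lambda>p. \<lambda>v\<in>H1. ?G p (\<phi> v)) (pmf_of_set Bs)"
    unfolding marg_def muH_eq map_pmf_comp
    by (intro map_pmf_cong refl restrict_ext) (simp add: phiH2)
  have H1eq: "H1 = (if a\<in>H1 then {a} else {}) \<union> (if v0\<in>H1 then {v0} else {}) \<union> (if b\<in>H1 then {b} else {})"
    using sub by auto
  have ne: "H1 \<noteq> {}" using con unfolding connected_in_def by auto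
  have nab: "H1 \<noteq> {a,b}"
  proof
    assume e: "H1 = {a,b}"
    let ?R = "\<lambda>u w. u \<in> H1 \<and> w \<in> H1 \<and> adj u w"
    have "?R\<^sup>*\<^sup>* a b" using con e unfolding connected_in_def by auto
    moreover have "\<And>u w. \<not> ?R u w" using e adj by auto
    ultimately have "a = b" by (rule rtranclp_empty)
    then show False using d by simp
  qed
  have ex: "\<exists>\<tau>\<in>Taus. \<forall>p\<in>Bs. \<forall>v\<in>H1. ?G p v = ?G (\<tau> p) (\<phi> v)"
  proof (cases "a\<in>H1"; cases "v0\<in>H1"; cases "b\<in>H1")
    assume c: "a \<in> H1" "v0 \<in> H1" "b \<in> H1"
    then have e: "H1 = {a,v0,b}" using H1eq by auto
    have m: "\<phi> a \<in> {a,v0,b}" "\<phi> v0 \<in> {a,v0,b}" "\<phi> b \<in> {a,v0,b}" using phiH c by auto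
    have i: "\<phi> a \<noteq> \<phi> v0" "\<phi> v0 \<noteq> \<phi> b" "\<phi> a \<noteq> \<phi> b" using inj c d by (auto dest: inj_onD)
    have j: "adj (\<phi> a) (\<phi> v0)" "adj (\<phi> v0) (\<phi> b)" "\<not> adj (\<phi> a) (\<phi> b)"
      using adjiff[of a v0] adjiff[of v0 b] adjiff[of a b] c adj by auto
    have "\<phi> v0 = v0" "(\<phi> a = a \<and> \<phi> b = b) \<or> (\<phi> a = b \<and> \<phi> b = a)"
      using m i j adj by (elim insertE emptyE; simp)+
    then show ?thesis unfolding e by (rule ex_full)
  next
    assume c: "a \<in> H1" "v0 \<in> H1" "b \<notin> H1"
    then have e: "H1 = {a,v0}" using H1eq by auto
    have m: "\<phi> a \<in> {a,v0,b}" "\<phi> v0 \<in> {a,v0,b}" using phiH c by auto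
    have i: "\<phi> a \<noteq> \<phi> v0" using inj c d by (auto dest: inj_onD)
    have j: "adj (\<phi> a) (\<phi> v0)" using adjiff[of a v0] c adj by auto
    have "\<phi> a \<noteq> b \<or> \<phi> v0 \<noteq> a" "\<phi> a \<noteq> a \<or> \<phi> v0 \<noteq> b" using j adj by auto
    then show ?thesis unfolding e using m i by (intro ex_edge1)
  next
    assume c: "a \<in> H1" "v0 \<notin> H1" "b \<in> H1"
    then have "H1 = {a,b}" using H1eq by auto
    then show ?thesis using nab by simp
  next
    assume c: "a \<in> H1" "v0 \<notin> H1" "b \<notin> H1"
    then have e: "H1 = {a}" using H1eq by auto
    show ?thesis unfolding e using phiH c by (intro ex_single) auto
  next
    assume c: "a \<notin> H1" "v0 \<in> H1" "b \<in> H1"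
    then have e: "H1 = {v0,b}" using H1eq by auto
    have m: "\<phi> v0 \<in> {a,v0,b}" "\<phi> b \<in> {a,v0,b}" using phiH c by auto
    have i: "\<phi> v0 \<noteq> \<phi> b" using inj c d by (auto dest: inj_onD)
    have j: "adj (\<phi> v0) (\<phi> b)" using adjiff[of v0 b] c adj by auto
    have "\<phi> v0 \<noteq> b \<or> \<phi> b \<noteq> a" "\<phi> v0 \<noteq> a \<or> \<phi> b \<noteq> b" using j adj by auto
    then show ?thesis unfolding e using m i by (intro ex_edge2)
  next
    assume c: "a \<notin> H1" "v0 \<in> H1" "b \<notin> H1"
    then have e: "H1 = {v0}" using H1eq by auto
    show ?thesis unfolding e using phiH c by (intro ex_single) auto
  next
    assume c: "a \<notin> H1" "v0 \<notin> H1" "b \<in> H1"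
    then have e: "H1 = {b}" using H1eq by auto
    show ?thesis unfolding e using phiH c by (intro ex_single) auto
  next
    assume c: "a \<notin> H1" "v0 \<notin> H1" "b \<notin> H1"
    then have "H1 = {}" using H1eq by auto
    then show ?thesis using ne by simp
  qed
  then obtain \<tau> where tau: "\<tau> \<in> Taus" "\<And>p v. p \<in> Bs \<Longrightarrow> v \<in> H1 \<Longrightarrow> ?G p v = ?G (\<tau> p) (\<phi> v)" by blast
  show "marg H1 (muH a v0 b) = map_pmf (\<lambda>\<xi>. \<lambda>v\<in>H1. \<xi> (\<phi> v)) (marg H2 (muH a v0 b))"
    unfolding L R
    by (rule perm_map[OF _ _ Taus_bij[OF tau(1)]]) (auto simp: Bs_def intro!: restrict_ext tau(2))
qed

lemma conn3: assumes "adj x y" "adj y x" "adj y z" "adj z y" shows "connected_in adj {x,y,z}"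
proof -
  let ?R = "\<lambda>u w. u \<in> {x,y,z} \<and> w \<in> {x,y,z} \<and> adj u w"
  have toy: "?R\<^sup>*\<^sup>* u y" if "u \<in> {x,y,z}" for u
    using that assms by (auto intro: r_into_rtranclp)
  have fromy: "?R\<^sup>*\<^sup>* y u" if "u \<in> {x,y,z}" for u
    using that assms by (auto intro: r_into_rtranclp)
  show ?thesis unfolding connected_in_def
    using toy fromy by (blast intro: rtranclp_trans)
qed

lemma muH_ne: "\<xi> \<in> set_pmf (muH a v0 b) \<Longrightarrow> \<xi> a \<noteq> \<xi> b"
  unfolding set_muH using d by (auto simp: cfg3_def)

lemma no_LI_ext:
  fixes adj and c :: 'v and T2
  assumes adj: "adj a v0" "adj v0 a" "adj v0 b" "adj b v0" "\<not> adj a b" "\<not> adj b a"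
    "\<not> adj a a" "\<not> adj v0 v0" "\<not> adj b b"
    and cc: "c \<noteq> a" "c \<noteq> v0" "c \<noteq> b" "adj v0 c" "adj c v0" "\<not> adj a c" "\<not> adj c a"
       "\<not> adj b c" "\<not> adj c b" "\<not> adj c c"
    and T2: "{a,v0,b,c} \<subseteq> T2"
  shows "\<not> (\<exists>\<mu>. LI adj T2 \<mu> \<and> marg {a,v0,b} \<mu> = muH a v0 b)"
proof
  assume "\<exists>\<mu>. LI adj T2 \<mu> \<and> marg {a,v0,b} \<mu> = muH a v0 b"
  then obtain \<mu> where LI: "LI adj T2 \<mu>" and mg: "marg {a,v0,b} \<mu> = muH a v0 b" by blast
  have mo: "set_pmf \<mu> \<subseteq> config_space T2" using LI unfolding LI_def measure_on_def by auto
  have LIr: "marg H1 \<mu> = map_pmf (\<lambda>\<xi>. \<lambda>v\<in>H1. \<xi> (\<phi> v)) (marg H2 \<mu>)"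
    if "H1 \<subseteq> T2" "H2 \<subseteq> T2" "connected_in adj H1" "connected_in adj H2" "graph_iso adj H1 H2 \<phi>"
    for H1 H2 \<phi> using LI that unfolding LI_def by blast
  have cH: "connected_in adj {a,v0,b}" by (rule conn3) (use adj in auto)
  have cH1: "connected_in adj {a,v0,c}" by (rule conn3) (use adj cc in auto)
  have cH2: "connected_in adj {b,v0,c}" by (rule conn3) (use adj cc in auto)
  have HH: "{b,v0,a} = {a,v0,b}" by auto
  have cH': "connected_in adj {b,v0,a}" using cH HH by simp
  let ?p1 = "\<lambda>v. if v = c then b else v"
  let ?p2 = "\<lambda>v. if v = c then a else v"
  have i1: "graph_iso adj {a,v0,c} {a,v0,b} ?p1"
    unfolding graph_iso_def bij_betw_def using d cc adj by auto
  have i2: "graph_iso adj {b,v0,c} {b,v0,a} ?p2"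
    unfolding graph_iso_def bij_betw_def using d cc adj by auto
  have e1: "marg {a,v0,c} \<mu> = map_pmf (\<lambda>\<xi>. \<lambda>v\<in>{a,v0,c}. \<xi> (?p1 v)) (muH a v0 b)"
    using LIr[OF _ _ cH1 cH i1] T2 mg by auto
  have e2: "marg {b,v0,c} \<mu> = map_pmf (\<lambda>\<xi>. \<lambda>v\<in>{b,v0,c}. \<xi> (?p2 v)) (muH a v0 b)"
    using LIr[OF _ _ cH2 cH' i2] T2 mg HH by auto
  obtain \<eta> where \<eta>: "\<eta> \<in> set_pmf \<mu>" using set_pmf_not_empty[of \<mu>] by blast
  have "restrict \<eta> {a,v0,b} \<in> set_pmf (marg {a,v0,b} \<mu>)" using \<eta> unfolding marg_def by auto
  then have "restrict \<eta> {a,v0,b} \<in> set_pmf (muH a v0 b)" using mg by simp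
  from muH_ne[OF this] have n1: "\<eta> a \<noteq> \<eta> b" by simp
  have "restrict \<eta> {a,v0,c} \<in> set_pmf (marg {a,v0,c} \<mu>)" using \<eta> unfolding marg_def by auto
  then obtain \<xi> where "\<xi> \<in> set_pmf (muH a v0 b)" "restrict \<eta> {a,v0,c} = (\<lambda>v\<in>{a,v0,c}. \<xi> (?p1 v))"
    unfolding e1 by auto
  note q = this
  have "\<eta> a = \<xi> a" using fun_cong[OF q(2), of a] cc by simp
  moreover have "\<eta> c = \<xi> b" using fun_cong[OF q(2), of c] by simp
  ultimately have n2: "\<eta> a \<noteq> \<eta> c" using muH_ne[OF q(1)] by simp
  have "restrict \<eta> {b,v0,c} \<in> set_pmf (marg {b,v0,c} \<mu>)" using \<eta> unfolding marg_def by auto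
  then obtain \<xi>' where "\<xi>' \<in> set_pmf (muH a v0 b)" "restrict \<eta> {b,v0,c} = (\<lambda>v\<in>{b,v0,c}. \<xi>' (?p2 v))"
    unfolding e2 by auto
  note q = this
  have "\<eta> b = \<xi>' b" using fun_cong[OF q(2), of b] cc by simp
  moreover have "\<eta> c = \<xi>' a" using fun_cong[OF q(2), of c] by simp
  ultimately have n3: "\<eta> b \<noteq> \<eta> c" using muH_ne[OF q(1)] by simp
  have "\<eta> \<in> config_space T2" using \<eta> mo by auto
  then have "\<eta> a \<in> {0,1}" "\<eta> b \<in> {0,1}" "\<eta> c \<in> {0,1}" using T2 unfolding config_space_def by auto
  then show False using n1 n2 n3 by auto
qed

end


lemma part3:
  fixes a v0 b c :: "nat list" and g1 g2
  assumes d: "a \<noteq> v0" "v0 \<noteq> b" "a \<noteq> b"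
    and V: "a \<in> T3V" "v0 \<in> T3V" "b \<in> T3V" "c \<in> T3V"
    and g: "T3_aut g1" "T3_aut g2" "g1 a = a" "g1 b = c" "g2 a = c" "g2 b = b"
    and ne: "\<And>\<xi>. \<xi> \<in> set_pmf (muH a v0 b) \<Longrightarrow> \<xi> a \<noteq> \<xi> b"
  shows "\<not> (\<exists>M. prob_space M \<and> sets M = sets tree_config_measure \<and> aut_invariant M \<and>
            (\<forall>\<xi>. measure M {\<eta> \<in> space M. restrict \<eta> {a,v0,b} = \<xi>} = pmf (muH a v0 b) \<xi>))"
proof
  assume "\<exists>M. prob_space M \<and> sets M = sets tree_config_measure \<and> aut_invariant M \<and>
            (\<forall>\<xi>. measure M {\<eta> \<in> space M. restrict \<eta> {a,v0,b} = \<xi>} = pmf (muH a v0 b) \<xi>)"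
  then obtain M where P: "prob_space M" and S: "sets M = sets tree_config_measure" and I: "aut_invariant M"
    and mg: "\<And>\<xi>. measure M {\<eta> \<in> space M. restrict \<eta> {a,v0,b} = \<xi>} = pmf (muH a v0 b) \<xi>" by blast
  interpret prob_space M by (rule P)
  have sp: "space M = PiE T3V (\<lambda>_. {0,1})"
    using sets_eq_imp_space_eq[OF S] by (simp add: tree_config_measure_def space_PiM)
  have mc: "(\<lambda>\<eta>. \<eta> v) \<in> measurable M (count_space {0,1})" if "v \<in> T3V" for v
  proof -
    have "(\<lambda>\<eta>. \<eta> v) \<in> measurable tree_config_measure (count_space {0,1})"
      unfolding tree_config_measure_def using that by (rule measurable_component_singleton)
    then show ?thesis by (subst measurable_cong_sets[OF S refl])
  qed
  have val: "\<eta> v \<in> {0,1}" if "\<eta> \<in> space M" "v \<in> T3V" for \<eta> v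
    using that sp by auto
  have Bv: "{\<eta> \<in> space M. \<eta> v = x} \<in> sets M" if "v \<in> T3V" for v x
  proof -
    have "(\<lambda>\<eta>. \<eta> v) -` ({x} \<inter> {0,1}) \<inter> space M \<in> sets M"
      by (rule measurable_sets[OF mc[OF that]]) auto
    also have "(\<lambda>\<eta>. \<eta> v) -` ({x} \<inter> {0,1}) \<inter> space M = {\<eta> \<in> space M. \<eta> v = x}"
      using val that by auto
    finally show ?thesis .
  qed
  define E where "E x y = {\<eta> \<in> space M. \<eta> x = \<eta> y}" for x y
  have Es: "E x y \<in> sets M" if "x \<in> T3V" "y \<in> T3V" for x y
  proof -
    have "E x y = ({\<eta> \<in> space M. \<eta> x = 0} \<inter> {\<eta> \<in> space M. \<eta> y = 0}) \<union>
                  ({\<eta> \<in> space M. \<eta> x = 1} \<inter> {\<eta> \<in> space M. \<eta> y = 1})"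
      unfolding E_def using val that by fastforce
    then show ?thesis using Bv that by simp
  qed
  define A where "A x y = {\<eta> \<in> space M. \<eta> a = x \<and> \<eta> v0 = y \<and> \<eta> b = x}" for x y
  have As: "A x y \<in> sets M" for x y
  proof -
    have "A x y = {\<eta> \<in> space M. \<eta> a = x} \<inter> {\<eta> \<in> space M. \<eta> v0 = y} \<inter> {\<eta> \<in> space M. \<eta> b = x}"
      unfolding A_def by auto
    then show ?thesis using Bv V by simp
  qed
  have A0: "measure M (A x y) = 0" for x y
  proof -
    have "A x y = {\<eta> \<in> space M. restrict \<eta> {a,v0,b} = cfg3 a v0 b x y x}"
      unfolding A_def
    proof (intro Collect_cong conj_cong refl iffI)
      fix \<eta> assume "\<eta> a = x \<and> \<eta> v0 = y \<and> \<eta> b = x"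
      then show "restrict \<eta> {a,v0,b} = cfg3 a v0 b x y x"
        using d by (auto simp: cfg3_def fun_eq_iff)
    next
      fix \<eta> assume h: "restrict \<eta> {a,v0,b} = cfg3 a v0 b x y x"
      show "\<eta> a = x \<and> \<eta> v0 = y \<and> \<eta> b = x"
        using fun_cong[OF h, of a] fun_cong[OF h, of v0] fun_cong[OF h, of b] d
        by (auto simp: cfg3_def)
    qed
    then have "measure M (A x y) = pmf (muH a v0 b) (cfg3 a v0 b x y x)" using mg by simp
    also have "\<dots> = 0"
    proof -
      have "cfg3 a v0 b x y x \<notin> set_pmf (muH a v0 b)"
        using ne[of "cfg3 a v0 b x y x"] d by (auto simp: cfg3_def)
      then show ?thesis by (simp add: set_pmf_eq)
    qed
    finally show ?thesis .
  qed
  have Eab: "measure M (E a b) = 0"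
  proof -
    have "E a b \<subseteq> (A 0 0 \<union> A 0 1) \<union> (A 1 0 \<union> A 1 1)"
    proof
      fix \<eta> assume "\<eta> \<in> E a b"
      then have "\<eta> \<in> space M" "\<eta> a = \<eta> b" unfolding E_def by auto
      moreover have "\<eta> a \<in> {0,1}" "\<eta> v0 \<in> {0,1}" using val V \<open>\<eta> \<in> space M\<close> by auto
      ultimately show "\<eta> \<in> (A 0 0 \<union> A 0 1) \<union> (A 1 0 \<union> A 1 1)" unfolding A_def by auto
    qed
    then have "measure M (E a b) \<le> measure M ((A 0 0 \<union> A 0 1) \<union> (A 1 0 \<union> A 1 1))"
      using As by (intro finite_measure_mono) auto
    also have "\<dots> \<le> measure M (A 0 0 \<union> A 0 1) + measure M (A 1 0 \<union> A 1 1)"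
      using As by (intro measure_Un_le) auto
    also have "\<dots> \<le> (measure M (A 0 0) + measure M (A 0 1)) + (measure M (A 1 0) + measure M (A 1 1))"
      using As by (intro add_mono measure_Un_le) auto
    also have "\<dots> = 0" using A0 by simp
    finally show ?thesis using measure_nonneg[of M "E a b"] by linarith
  qed
  have inv: "measure M (E (g x) (g y)) = measure M (E x y)" if gg: "T3_aut g" and xy: "x \<in> T3V" "y \<in> T3V" for g x y
  proof -
    define T where "T \<eta> = (\<lambda>v\<in>T3V. \<eta> (g v))" for \<eta> :: "nat list \<Rightarrow> nat"
    have gT: "g v \<in> T3V" if "v \<in> T3V" for v using gg that unfolding T3_aut_def by (auto simp: bij_betw_apply)
    have "T \<in> measurable tree_config_measure tree_config_measure"
      unfolding T_def tree_config_measure_def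
      by (rule measurable_restrict) (rule measurable_component_singleton, rule gT)
    then have Tm: "T \<in> measurable M M" by (subst measurable_cong_sets[OF S S])
    have "distr M M T = M" using I gg unfolding aut_invariant_def T_def by blast
    then have "measure M (E x y) = measure (distr M M T) (E x y)" by simp
    also have "\<dots> = measure M (T -` E x y \<inter> space M)" by (rule measure_distr[OF Tm Es[OF xy]])
    also have "T -` E x y \<inter> space M = E (g x) (g y)"
      using measurable_space[OF Tm] xy unfolding E_def T_def by auto
    finally show ?thesis by simp
  qed
  have Eac: "measure M (E a c) = 0" using inv[OF g(1) V(1) V(3)] g Eab by simp
  have Ecb: "measure M (E c b) = 0" using inv[OF g(2) V(1) V(3)] g Eab by simp
  have "space M \<subseteq> (E a b \<union> E a c) \<union> E c b"
  proof
    fix \<eta> assume h: "\<eta> \<in> space M"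
    then have "\<eta> a \<in> {0,1}" "\<eta> b \<in> {0,1}" "\<eta> c \<in> {0,1}" using val V by auto
    then show "\<eta> \<in> (E a b \<union> E a c) \<union> E c b" using h unfolding E_def by auto
  qed
  then have "measure M (space M) \<le> measure M ((E a b \<union> E a c) \<union> E c b)"
    using Es V by (intro finite_measure_mono) auto
  also have "\<dots> \<le> measure M (E a b \<union> E a c) + measure M (E c b)"
    using Es V by (intro measure_Un_le) auto
  also have "\<dots> \<le> (measure M (E a b) + measure M (E a c)) + measure M (E c b)"
    using Es V by (intro add_mono measure_Un_le) auto
  also have "\<dots> = 0" using Eab Eac Ecb by simp
  finally show False using prob_space by simp
qed



lemma nbr_nonadj: assumes "T3_adj v x" "T3_adj v y" shows "\<not> T3_adj x y"
proof
  assume "T3_adj x y"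
  from T3_adj_len[OF this] T3_adj_len[OF assms(1)] T3_adj_len[OF assms(2)] show False by arith
qed

theorem mainTheorem12:
  fixes v0 a b :: "nat list"
  assumes "v0 \<in> T3V" and "T3_adj v0 a" and "T3_adj v0 b" and "a \<noteq> b"
  defines "T2 \<equiv> insert v0 {w. T3_adj v0 w}"
      and "H \<equiv> {a, v0, b}"
  shows "LI T3_adj H (muH a v0 b)
    \<and> \<not> (\<exists>\<mu>. LI T3_adj T2 \<mu> \<and> marg H \<mu> = muH a v0 b)
    \<and> \<not> (\<exists>M. prob_space M \<and> sets M = sets tree_config_measure \<and> aut_invariant M \<and>
            (\<forall>\<xi>. measure M {\<eta> \<in> space M. restrict \<eta> H = \<xi>} = pmf (muH a v0 b) \<xi>))"
proof -
  note v0 = assms(1) and aa = assms(2) and ab = assms(3) and ne = assms(4)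
  have d: "a \<noteq> v0" "v0 \<noteq> b" "a \<noteq> b" using aa ab ne T3_adj_irrefl by metis+
  have V: "a \<in> T3V" "b \<in> T3V" using aa ab unfolding T3_adj_def by auto
  have sv: "set v0 \<subseteq> {0,1,2}" using v0 unfolding T3V_iff T3_vert_def by auto
  have srv: "set (rev v0) \<subseteq> {0,1,2}" using sv by simp
  define F where "F = Lw v0"
  define F' where "F' = Lw (rev v0)"
  have Fa: "T3_aut F" "T3_aut F'" unfolding F_def F'_def using Lw_aut sv srv by auto
  have FF: "F' (F w) = w" if "w \<in> T3V" for w unfolding F_def F'_def using Lw_inv[OF sv that] .
  have FF': "F (F' w) = w" if "w \<in> T3V" for w unfolding F_def F'_def using Lw_inv[OF srv that] by simp
  have F0: "F [] = v0" unfolding F_def using Lw_Nil v0 T3V_iff by auto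
  have F'0: "F' v0 = []" using FF[of "[]"] F0 by (simp add: T3V_iff)
  have nb: "\<exists>i\<in>{0,1,2}. x = F [i]" if "T3_adj v0 x" for x
  proof -
    have "T3_adj [] (F' x)" using aut_adj[OF Fa(2) that] F'0 by simp
    then obtain i where "i \<in> {0,1,2}" "F' x = [i]" using T3_adj_Nil by blast
    moreover have "x \<in> T3V" using that unfolding T3_adj_def by auto
    ultimately show ?thesis using FF' by metis
  qed
  obtain i where i: "i \<in> {0,1,2}" "a = F [i]" using nb[OF aa] by blast
  obtain j where j: "j \<in> {0,1,2}" "b = F [j]" using nb[OF ab] by blast
  have ij: "i \<noteq> j" using i(2) j(2) ne by metis
  have "(3 - i - j) \<in> {0,1,2} \<and> 3 - i - j \<noteq> i \<and> 3 - i - j \<noteq> j" using i(1) j(1) ij by auto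
  then obtain k where k: "k \<in> {0,1,2}" "k \<noteq> i" "k \<noteq> j" by blast
  define c where "c = F [k]"
  have Tk: "[k] \<in> T3V" "[i] \<in> T3V" "[j] \<in> T3V" "[] \<in> T3V" using i j k by (auto simp: T3V_iff T3_vert_Cons)
  have f1: "F' (F [k]) = [k]" "F' (F [i]) = [i]" "F' (F [j]) = [j]" "F' (F []) = []"
    using FF Tk by auto
  have cne1: "c \<noteq> a" unfolding c_def i(2)
  proof
    assume "F [k] = F [i]" then have "F' (F [k]) = F' (F [i])" by simp
    then show False using f1 k by simp
  qed
  have cne2: "c \<noteq> v0" unfolding c_def F0[symmetric]
  proof
    assume "F [k] = F []" then have "F' (F [k]) = F' (F [])" by simp
    then show False using f1 k by simp
  qed
  have cne3: "c \<noteq> b" unfolding c_def j(2)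
  proof
    assume "F [k] = F [j]" then have "F' (F [k]) = F' (F [j])" by simp
    then show False using f1 k by simp
  qed
  note cne = cne1 cne2 cne3
  have ac: "T3_adj v0 c" unfolding c_def using aut_adj[OF Fa(1) T3_adj_Nil2[OF k(1)]] F0 by simp
  have cV: "c \<in> T3V" using ac unfolding T3_adj_def by auto
  have sym: "T3_adj x v0" if "T3_adj v0 x" for x using that T3_adj_sym by blast
  have adjs: "T3_adj a v0" "T3_adj v0 a" "T3_adj v0 b" "T3_adj b v0" "\<not> T3_adj a b" "\<not> T3_adj b a"
    "\<not> T3_adj a a" "\<not> T3_adj v0 v0" "\<not> T3_adj b b"
    using aa ab sym nbr_nonadj T3_adj_irrefl by blast+
  have adjc: "T3_adj v0 c" "T3_adj c v0" "\<not> T3_adj a c" "\<not> T3_adj c a"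
       "\<not> T3_adj b c" "\<not> T3_adj c b" "\<not> T3_adj c c"
    using aa ab ac sym nbr_nonadj T3_adj_irrefl by blast+
  have P1: "LI T3_adj H (muH a v0 b)" unfolding H_def by (rule LI_muH[OF d adjs])
  have T2s: "{a,v0,b,c} \<subseteq> T2" unfolding T2_def using aa ab ac by auto
  have P2: "\<not> (\<exists>\<mu>. LI T3_adj T2 \<mu> \<and> marg H \<mu> = muH a v0 b)"
    unfolding H_def by (rule no_LI_ext[OF d adjs cne adjc T2s])
  define g1 where "g1 = F \<circ> Pm j k \<circ> F'"
  define g2 where "g2 = F \<circ> Pm i k \<circ> F'"
  have gaut: "T3_aut g1" "T3_aut g2" unfolding g1_def g2_def
    using Fa Pm_aut i j k by (auto intro!: aut_comp)
  have gv: "g1 a = a" "g1 b = c" "g2 a = c" "g2 b = b"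
    unfolding g1_def g2_def c_def using FF Tk i j k ij by (auto simp: Pm_def sw_def)
  have P3: "\<not> (\<exists>M. prob_space M \<and> sets M = sets tree_config_measure \<and> aut_invariant M \<and>
            (\<forall>\<xi>. measure M {\<eta> \<in> space M. restrict \<eta> H = \<xi>} = pmf (muH a v0 b) \<xi>))"
    unfolding H_def by (rule part3[OF d V(1) v0 V(2) cV gaut gv muH_ne[OF d]])
  show ?thesis using P1 P2 P3 by blast
qed

end
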